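(* Let $(D_-,D_+,H)$ be a periodic upwind DP SBP triple, $D=\tfrac12(D_++D_-)$, $g>0$, and $\gamma_1,\gamma_2\ge0$. Let $\mathbf h,\mathbf m:[0,T]\to\mathbb{R}^N$ be differentiable with $h_j(t)>0$ for all $j,t$, and set $\mathbf u=\mathbf m/\mathbf h$ (entrywise). Suppose $\mathbf U=(\mathbf h;\mathbf m)$ satisfies the semi-discrete shallow water scheme $$\partial_t\mathbf h+D(\mathbf h\circ\mathbf u)=\tfrac{\gamma_1}{2}(D_+-D_-)\mathbf g_1,\qquad \partial_t\mathbf m+\tfrac12 D(\mathbf h\circ\mathbf u\circ\mathbf u)+\tfrac12\mathbf u\circ D(\mathbf h\circ\mathbf u)+\tfrac12(\mathbf h\circ\mathbf u)\circ D\mathbf u+g\,\mathbf h\circ D\mathbf h=\tfrac{\gamma_2}{2}(D_+-D_-)\mathbf g_2,$$ where $\mathbf g_1=g\mathbf h-\tfrac12\mathbf u\circ\mathbf u$, $\mathbf g_2=\mathbf u$. Let $E_h(t)=\sum_{j=1}^N h_j^{H}\big(\tfrac12 h_j u_j^2+\tfrac12 g h_j^2\big)$ where $h^H_j$ are the diagonal entries of $H$. Then (1) $\frac{d}{dt}E_h=\tfrac12\sum_{i=1}^2\gamma_i\langle\mathbf g_i,(D_+-D_-)\mathbf g_i\rangle_H\le0$, with $E_h$ constant if $\gamma_1=\gamma_2=0$; (2) $\frac{d}{dt}\langle\mathbf 1,\mathbf h\rangle_H=0$ and $\frac{d}{dt}\langle\mathbf 1,\mathbf m\rangle_H=0$ (total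 mass and total momentum are conserved).
   Context: Fix $N\ge2$, $H=\mathrm{diag}(h^H_1,\dots,h^H_N)$ with $h^H_j>0$, $\langle \mathbf f,\mathbf g\rangle_H=\mathbf f^TH\mathbf g$, $\mathbf 1=(1,\dots,1)^T\in\mathbb{R}^N$; $\circ$ is the entrywise product. A triple $(D_-,D_+,H)$ with $D_\pm\in\mathbb{R}^{N\times N}$ is a periodic upwind DP SBP triple if (i) $\langle D_+\mathbf f,\mathbf g\rangle_H+\langle \mathbf f,D_-\mathbf g\rangle_H=0$ for all $\mathbf f,\mathbf g\in\mathbb{R}^N$; (ii) $\langle \mathbf f,(D_+-D_-)\mathbf f\rangle_H\le0$ for all $\mathbf f\in\mathbb{R}^N$; (iii) $D_+\mathbf 1=D_-\mathbf 1=\mathbf 0$. Here $\mathbf h$ is the water height, $\mathbf m=\mathbf h\circ\mathbf u$ the momentum, $g$ the gravitational constant. *)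

theory Defs
  imports "HOL-Analysis.Analysis"
begin

text \<open>Vectors in R^N are real^'n with CARD('n) = N; matrices are real^'n^'n acting by *v.
  The diagonal norm matrix H is represented by its diagonal entries hH.\<close>

definition ipH :: "real^'n \<Rightarrow> real^'n \<Rightarrow> real^'n \<Rightarrow> real" where
  "ipH hH f g = (\<Sum>j\<in>UNIV. f $ j * hH $ j * g $ j)"

definition had :: "real^'n \<Rightarrow> real^'n \<Rightarrow> real^'n" (infixl "\<circ>\<^sub>e" 70) where
  "had f g = (\<chi> j. f $ j * g $ j)"

definition ediv :: "real^'n \<Rightarrow> real^'n \<Rightarrow> real^'n" where
  "ediv f g = (\<chi> j. f $ j / g $ j)"

definition ones :: "real^'n" where
  "ones = (\<chi> j. 1)"

definition periodic_upwind_SBP :: "real^'n^'n \<Rightarrow> real^'n^'n \<Rightarrow> real^'n \<Rightarrow> bool" where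
  "periodic_upwind_SBP Dm Dp hH \<longleftrightarrow>
     (\<forall>j. hH $ j > 0) \<and>
     (\<forall>f g. ipH hH (Dp *v f) g + ipH hH f (Dm *v g) = 0) \<and>
     (\<forall>f. ipH hH f ((Dp - Dm) *v f) \<le> 0) \<and>
     Dp *v ones = 0 \<and> Dm *v ones = 0"

end

theory Submission
  imports Defs
begin

lemma vec_comp_deriv:
  fixes f :: "real \<Rightarrow> real^'n"
  assumes "(f has_vector_derivative f') F"
  shows "((\<lambda>s. f s $ j) has_real_derivative f' $ j) F"
proof -
  have "((\<lambda>s. f s $ j) has_derivative (\<lambda>x. (x *\<^sub>R f') $ j)) F"
    using bounded_linear.has_derivative[OF bounded_linear_vec_nth assms[unfolded has_vector_derivative_def]] .
  moreover have "(\<lambda>x. (x *\<^sub>R f') $ j) = (*) (f' $ j)" by (auto simp: fun_eq_iff)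
  ultimately show ?thesis by (simp add: has_field_derivative_def)
qed

lemma ipH_deriv:
  fixes f :: "real \<Rightarrow> real^'n"
  assumes "(f has_vector_derivative f') (at x within S)"
  shows "((\<lambda>s. ipH w a (f s)) has_real_derivative ipH w a f') (at x within S)"
  unfolding ipH_def
  apply (rule DERIV_sum)
  apply (rule DERIV_cmult)
  by (rule vec_comp_deriv[OF assms])

lemma comp_deriv:
  fixes a b :: "real \<Rightarrow> real"
  assumes "(a has_real_derivative a') (at x within S)" "(b has_real_derivative b') (at x within S)" "b x \<noteq> 0"
  shows "((\<lambda>s. c * ((1/2) * b s * (a s / b s)^2 + (1/2)*g*(b s)^2)) has_real_derivative
     c*((a x/b x)*a' + (g*b x - (1/2)*(a x/b x)^2)*b')) (at x within S)"
proof -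
  have X: "((\<lambda>s. c * ((1/2) * b s * (a s / b s)^2 + (1/2)*g*(b s)^2)) has_real_derivative
     c * ((1/2) * b' * (a x / b x)^2 + (1/2) * b x * (2 * (a x / b x) * ((a' * b x - a x * b') / (b x * b x)))
         + (1/2)*g*(2 * b x * b'))) (at x within S)"
    apply (rule derivative_eq_intros assms refl)+
    using assms(3) apply simp
    done
  have Y: "c * ((1/2) * b' * (a x / b x)^2 + (1/2) * b x * (2 * (a x / b x) * ((a' * b x - a x * b') / (b x * b x)))
         + (1/2)*g*(2 * b x * b')) = c*((a x/b x)*a' + (g*b x - (1/2)*(a x/b x)^2)*b')"
    using assms(3) by (simp add: field_simps power2_eq_square)
  show ?thesis using X unfolding Y .
qed

lemma ipH_add_left[simp]: "ipH w (a + b) c = ipH w a c + ipH w b c"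
  by (simp add: ipH_def sum.distrib distrib_right)
lemma ipH_add_right[simp]: "ipH w c (a + b) = ipH w c a + ipH w c b"
  by (simp add: ipH_def sum.distrib distrib_left)
lemma ipH_diff_left[simp]: "ipH w (a - b) c = ipH w a c - ipH w b c"
  by (simp add: ipH_def sum_subtractf left_diff_distrib)
lemma ipH_diff_right[simp]: "ipH w c (a - b) = ipH w c a - ipH w c b"
  by (simp add: ipH_def sum_subtractf right_diff_distrib)
lemma ipH_scale_left[simp]: "ipH w (k *\<^sub>R a) c = k * ipH w a c"
  by (simp add: ipH_def sum_distrib_left mult.assoc)
lemma ipH_scale_right[simp]: "ipH w c (k *\<^sub>R a) = k * ipH w c a"
  by (simp add: ipH_def sum_distrib_left algebra_simps)
lemma ipH_sym: "ipH w a b = ipH w b a"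
  by (simp add: ipH_def mult.commute mult.left_commute)
lemma ipH_had: "ipH w a (b \<circ>\<^sub>e c) = ipH w (a \<circ>\<^sub>e b) c"
  by (simp add: ipH_def had_def mult.commute mult.left_commute)
lemma ipH_ones_had: "ipH w ones (a \<circ>\<^sub>e b) = ipH w a b"
  by (simp add: ipH_def had_def ones_def mult.commute mult.left_commute)
lemma had_comm: "a \<circ>\<^sub>e b = b \<circ>\<^sub>e a"
  by (simp add: had_def mult.commute)

lemma D_apply: "((1/2) *\<^sub>R (Dp + Dm)) *v (x::real^'n) = (1/2) *\<^sub>R (Dp *v x) + (1/2) *\<^sub>R (Dm *v x)"
  by (simp add: scaleR_matrix_vector_assoc[symmetric] matrix_vector_mult_add_rdistrib scaleR_right_distrib)

lemma SBP_facts: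
  assumes "periodic_upwind_SBP Dm Dp hH"
  shows "ipH hH (((1/2) *\<^sub>R (Dp + Dm)) *v f) g = - ipH hH f (((1/2) *\<^sub>R (Dp + Dm)) *v g)"
    and "ipH hH ones (Dp *v f) = 0" and "ipH hH ones (Dm *v f) = 0"
proof -
  have s: "\<And>f g. ipH hH (Dp *v f) g + ipH hH f (Dm *v g) = 0"
    and o1: "Dp *v ones = 0" and o2: "Dm *v ones = 0"
    using assms by (auto simp: periodic_upwind_SBP_def)
  have s2: "ipH hH (Dm *v f) g = - ipH hH f (Dp *v g)" for f g
    using s[of g f] by (simp add: ipH_sym)
  show "ipH hH (((1/2) *\<^sub>R (Dp + Dm)) *v f) g = - ipH hH f (((1/2) *\<^sub>R (Dp + Dm)) *v g)"
    unfolding D_apply using s[of f g] s2[of f g] by simp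
  have z: "ipH hH 0 x = 0" for x by (simp add: ipH_def)
  show "ipH hH ones (Dp *v f) = 0" using s[of f ones] o2 z
    by (simp add: ipH_sym[of _ _ ones] ipH_sym[of _ f 0])
  show "ipH hH ones (Dm *v f) = 0" using s[of ones f] o1 z by simp
qed

theorem mainTheorem10:
  fixes Dm Dp :: "real^'n^'n" and hH :: "real^'n"
    and g \<gamma>1 \<gamma>2 T :: real
    and h m h' m' :: "real \<Rightarrow> real^'n"
  assumes N: "CARD('n) \<ge> 2"
    and SBP: "periodic_upwind_SBP Dm Dp hH"
    and g: "g > 0" and g1: "\<gamma>1 \<ge> 0" and g2: "\<gamma>2 \<ge> 0"
    and T: "T > 0"
    and dh: "\<And>t. t \<in> {0..T} \<Longrightarrow> (h has_vector_derivative h' t) (at t within {0..T})"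
    and dm: "\<And>t. t \<in> {0..T} \<Longrightarrow> (m has_vector_derivative m' t) (at t within {0..T})"
    and pos: "\<And>t j. t \<in> {0..T} \<Longrightarrow> h t $ j > 0"
    and eq_h: "\<And>t. t \<in> {0..T} \<Longrightarrow>
       (let D = (1/2) *\<^sub>R (Dp + Dm); u = ediv (m t) (h t);
            G1 = g *\<^sub>R h t - (1/2) *\<^sub>R (u \<circ>\<^sub>e u)
        in h' t + D *v (h t \<circ>\<^sub>e u) = (\<gamma>1 / 2) *\<^sub>R ((Dp - Dm) *v G1))"
    and eq_m: "\<And>t. t \<in> {0..T} \<Longrightarrow>
       (let D = (1/2) *\<^sub>R (Dp + Dm); u = ediv (m t) (h t); G2 = u
        in m' t + (1/2) *\<^sub>R (D *v (h t \<circ>\<^sub>e u \<circ>\<^sub>e u))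
               + (1/2) *\<^sub>R (u \<circ>\<^sub>e (D *v (h t \<circ>\<^sub>e u)))
               + (1/2) *\<^sub>R ((h t \<circ>\<^sub>e u) \<circ>\<^sub>e (D *v u))
               + g *\<^sub>R (h t \<circ>\<^sub>e (D *v h t))
           = (\<gamma>2 / 2) *\<^sub>R ((Dp - Dm) *v G2))"
  defines "E \<equiv> \<lambda>t. \<Sum>j\<in>UNIV. hH $ j *
             ((1/2) * h t $ j * (ediv (m t) (h t) $ j)^2 + (1/2) * g * (h t $ j)^2)"
  shows "(\<forall>t\<in>{0..T}.
            (let u = ediv (m t) (h t);
                 G1 = g *\<^sub>R h t - (1/2) *\<^sub>R (u \<circ>\<^sub>e u); G2 = u;
                 dE = (1/2) * (\<gamma>1 * ipH hH G1 ((Dp - Dm) *v G1)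
                              + \<gamma>2 * ipH hH G2 ((Dp - Dm) *v G2))
             in (E has_real_derivative dE) (at t within {0..T}) \<and> dE \<le> 0))
       \<and> (\<gamma>1 = 0 \<and> \<gamma>2 = 0 \<longrightarrow> (\<forall>t\<in>{0..T}. E t = E 0))
       \<and> (\<forall>t\<in>{0..T}. ((\<lambda>s. ipH hH ones (h s)) has_real_derivative 0) (at t within {0..T})
                     \<and> ((\<lambda>s. ipH hH ones (m s)) has_real_derivative 0) (at t within {0..T}))"
proof -
  define D where "D = (1/2) *\<^sub>R (Dp + Dm)"
  have skew: "ipH hH (D *v f) k = - ipH hH f (D *v k)" for f k
    unfolding D_def by (rule SBP_facts(1)[OF SBP])
  have skew0: "ipH hH f (D *v f) = 0" for f
    using skew[of f f] by (simp add: ipH_sym)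
  have onesP: "ipH hH ones ((Dp - Dm) *v f) = 0" for f
    using SBP_facts(2,3)[OF SBP, of f] by (simp add: matrix_vector_mult_diff_rdistrib)
  have onesD: "ipH hH ones (D *v f) = 0" for f
    using SBP_facts(2,3)[OF SBP, of f] unfolding D_def D_apply by simp
  have main: "(E has_real_derivative (ipH hH u (m' t) + ipH hH G1 (h' t))) (at t within {0..T})
      \<and> ipH hH u (m' t) + ipH hH G1 (h' t) = (1/2) * (\<gamma>1 * ipH hH G1 ((Dp - Dm) *v G1)
                              + \<gamma>2 * ipH hH u ((Dp - Dm) *v u))
      \<and> ipH hH ones (h' t) = 0 \<and> ipH hH ones (m' t) = 0"
    if t: "t \<in> {0..T}" and u: "u = ediv (m t) (h t)" and G1: "G1 = g *\<^sub>R h t - (1/2) *\<^sub>R (u \<circ>\<^sub>e u)"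
    for t u G1
  proof -
    have c: "((\<lambda>s. hH$j * ((1/2) * h s $ j * (ediv (m s) (h s) $ j)^2 + (1/2)*g*(h s $ j)^2))
        has_real_derivative hH$j*((m t $ j/h t $ j)*m' t $ j + (g*h t $ j - (1/2)*(m t $ j/h t $ j)^2)*h' t $ j))
        (at t within {0..T})" for j
      unfolding ediv_def vec_lambda_beta
      by (rule comp_deriv[OF vec_comp_deriv[OF dm[OF t]] vec_comp_deriv[OF dh[OF t]]])
        (use pos[OF t, of j] in auto)
    have "(E has_real_derivative (\<Sum>j\<in>UNIV. hH$j*((m t $ j/h t $ j)*m' t $ j + (g*h t $ j - (1/2)*(m t $ j/h t $ j)^2)*h' t $ j)))
        (at t within {0..T})"
      unfolding E_def by (rule DERIV_sum) (rule c)
    moreover have "(\<Sum>j\<in>UNIV. hH$j*((m t $ j/h t $ j)*m' t $ j + (g*h t $ j - (1/2)*(m t $ j/h t $ j)^2)*h' t $ j))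
        = ipH hH u (m' t) + ipH hH G1 (h' t)"
      unfolding ipH_def u G1 ediv_def had_def sum.distrib[symmetric]
      by (intro sum.cong refl) (simp add: algebra_simps power2_eq_square)
    ultimately have d1: "(E has_real_derivative (ipH hH u (m' t) + ipH hH G1 (h' t))) (at t within {0..T})"
      by simp
    let ?hu = "h t \<circ>\<^sub>e u"
    have eh: "h' t = (\<gamma>1 / 2) *\<^sub>R ((Dp - Dm) *v G1) - D *v ?hu"
      using eq_h[OF t] unfolding Let_def D_def[symmetric] u[symmetric] G1[symmetric]
      by (simp add: algebra_simps)
    have em: "m' t = (\<gamma>2 / 2) *\<^sub>R ((Dp - Dm) *v u) - (1/2) *\<^sub>R (D *v (?hu \<circ>\<^sub>e u))
               - (1/2) *\<^sub>R (u \<circ>\<^sub>e (D *v ?hu)) - (1/2) *\<^sub>R (?hu \<circ>\<^sub>e (D *v u))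
               - g *\<^sub>R (h t \<circ>\<^sub>e (D *v h t))"
      using eq_m[OF t] unfolding Let_def D_def[symmetric] u[symmetric]
      by (simp add: algebra_simps)
    have a1: "ipH hH u (D *v (?hu \<circ>\<^sub>e u)) = - ipH hH (D *v u) (?hu \<circ>\<^sub>e u)"
      using skew[of u "?hu \<circ>\<^sub>e u"] by simp
    have a2: "ipH hH u (u \<circ>\<^sub>e (D *v ?hu)) = ipH hH (u \<circ>\<^sub>e u) (D *v ?hu)"
      by (rule ipH_had)
    have a3: "ipH hH u (?hu \<circ>\<^sub>e (D *v u)) = ipH hH (D *v u) (?hu \<circ>\<^sub>e u)"
      by (simp add: ipH_had had_comm[of u] ipH_sym[of _ _ "D *v u"])
    have a4: "ipH hH u (h t \<circ>\<^sub>e (D *v h t)) = - ipH hH (h t) (D *v ?hu)"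
      using skew[of "h t" ?hu] by (simp add: ipH_had had_comm[of u] ipH_sym[of _ _ "D *v h t"])
    have b: "ipH hH G1 (D *v ?hu) = g * ipH hH (h t) (D *v ?hu) - (1/2) * ipH hH (u \<circ>\<^sub>e u) (D *v ?hu)"
      unfolding G1 by simp
    have d2: "ipH hH u (m' t) + ipH hH G1 (h' t) = (1/2) * (\<gamma>1 * ipH hH G1 ((Dp - Dm) *v G1)
                              + \<gamma>2 * ipH hH u ((Dp - Dm) *v u))"
      unfolding em eh ipH_diff_right ipH_scale_right a1 a2 a3 a4 b
      by (simp add: algebra_simps)
    have d3: "ipH hH ones (h' t) = 0"
      unfolding eh by (simp add: onesP onesD)
    have d4: "ipH hH ones (m' t) = 0"
      unfolding em using skew[of u ?hu] skew0[of "h t"]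
      by (simp add: onesP onesD ipH_ones_had ipH_sym[of _ _ "D *v u"])
    show ?thesis using d1 d2 d3 d4 by blast
  qed
  have P1: "\<forall>t\<in>{0..T}.
            (let u = ediv (m t) (h t);
                 G1 = g *\<^sub>R h t - (1/2) *\<^sub>R (u \<circ>\<^sub>e u); G2 = u;
                 dE = (1/2) * (\<gamma>1 * ipH hH G1 ((Dp - Dm) *v G1)
                              + \<gamma>2 * ipH hH G2 ((Dp - Dm) *v G2))
             in (E has_real_derivative dE) (at t within {0..T}) \<and> dE \<le> 0)"
  proof
    fix t assume t: "t \<in> {0..T}"
    define u where "u = ediv (m t) (h t)"
    define G1 where "G1 = g *\<^sub>R h t - (1/2) *\<^sub>R (u \<circ>\<^sub>e u)"
    have nP: "ipH hH f ((Dp - Dm) *v f) \<le> 0" for f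
      using SBP by (simp add: periodic_upwind_SBP_def)
    have "\<gamma>1 * ipH hH G1 ((Dp - Dm) *v G1) \<le> 0"
      using nP[of G1] g1 by (simp add: mult_nonneg_nonpos)
    moreover have "\<gamma>2 * ipH hH u ((Dp - Dm) *v u) \<le> 0"
      using nP[of u] g2 by (simp add: mult_nonneg_nonpos)
    moreover obtain d1 where d1: "(E has_real_derivative (ipH hH u (m' t) + ipH hH G1 (h' t))) (at t within {0..T})"
      and d2: "ipH hH u (m' t) + ipH hH G1 (h' t) = (1/2) * (\<gamma>1 * ipH hH G1 ((Dp - Dm) *v G1)
                              + \<gamma>2 * ipH hH u ((Dp - Dm) *v u))"
      using main[OF t u_def G1_def] by blast
    have D1: "(E has_real_derivative (1/2) * (\<gamma>1 * ipH hH G1 ((Dp - Dm) *v G1)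
                              + \<gamma>2 * ipH hH u ((Dp - Dm) *v u))) (at t within {0..T})"
      using d1 unfolding d2 .
    ultimately have L: "(1/2) * (\<gamma>1 * ipH hH G1 ((Dp - Dm) *v G1)
                              + \<gamma>2 * ipH hH u ((Dp - Dm) *v u)) \<le> 0"
      by simp
    show "let u = ediv (m t) (h t);
                 G1 = g *\<^sub>R h t - (1/2) *\<^sub>R (u \<circ>\<^sub>e u); G2 = u;
                 dE = (1/2) * (\<gamma>1 * ipH hH G1 ((Dp - Dm) *v G1)
                              + \<gamma>2 * ipH hH G2 ((Dp - Dm) *v G2))
             in (E has_real_derivative dE) (at t within {0..T}) \<and> dE \<le> 0"
      unfolding Let_def u_def[symmetric] G1_def[symmetric]
      using D1 L by blast
  qed
  have P2: "\<gamma>1 = 0 \<and> \<gamma>2 = 0 \<longrightarrow> (\<forall>t\<in>{0..T}. E t = E 0)"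
  proof
    assume z: "\<gamma>1 = 0 \<and> \<gamma>2 = 0"
    have "\<exists>c. \<forall>x\<in>{0..T}. E x = c"
    proof (rule has_field_derivative_zero_constant)
      show "convex {0..T}" by simp
      fix x assume x: "x \<in> {0..T}"
      show "(E has_real_derivative 0) (at x within {0..T})"
        using main[OF x refl refl] z by auto
    qed
    then obtain c where "\<forall>x\<in>{0..T}. E x = c" by blast
    moreover have "0 \<in> {0..T}" using T by simp
    ultimately show "\<forall>t\<in>{0..T}. E t = E 0" by simp
  qed
  have P3: "\<forall>t\<in>{0..T}. ((\<lambda>s. ipH hH ones (h s)) has_real_derivative 0) (at t within {0..T})
                     \<and> ((\<lambda>s. ipH hH ones (m s)) has_real_derivative 0) (at t within {0..T})"
  proof
    fix t assume t: "t \<in> {0..T}"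
    show "((\<lambda>s. ipH hH ones (h s)) has_real_derivative 0) (at t within {0..T})
                     \<and> ((\<lambda>s. ipH hH ones (m s)) has_real_derivative 0) (at t within {0..T})"
      using ipH_deriv[OF dh[OF t], of hH ones] ipH_deriv[OF dm[OF t], of hH ones] main[OF t refl refl]
      by auto
  qed
  show ?thesis using P1 P2 P3 by blast
qed

end
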